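(* Let $\lambda=(\lambda_1,\dots,\lambda_m)$ be an $m$-row shape. Then $$\xi(q)=\sum_k|S_k(\lambda)|q^k=\sum_{(i_1,\dots,i_{m-1})}\Big(|\mathcal D_\lambda(i_1,\dots,i_{m-1})|\prod_{j=1}^{m-1}[j+1]_q^{\,i_j}\Big),$$ the sum ranging over all tuples of nonnegative integers.
   Context: $\lambda_1\ge\dots\ge\lambda_m\ge1$, $N=\sum\lambda_i$. A row-standard filling of shape $\lambda$ uses $1,\dots,N$ once each with rows strictly increasing left to right. Inversion pairs of a row-standard $\tau$: for a box $c$ and $r\ge1$ let $c^{(r)}$ be the box $r$ positions to its right, if it exists. For distinct boxes $c,c'$ in the same column with $\tau(c)<\tau(c')$, let $r\ge1$ be least such that one of $c^{(r)},c'^{(r)}$ does not exist or $\tau(c^{(r)})\ne\tau(c'^{(r)})$; $(c,c')$ is an inversion pair if either (one does not exist and $c$ lies below $c'$) or (both exist and $\tau(c^{(r)})>\tau(c'^{(r)})$). $S_k(\lambda)$: row-standard fillings of shape $\lambda$ with exactly $k$ inversion pairs. An $m$-dimensional Dyck path of shape $\lambda$ is a sequence $v_0,\dots,v_N\in\mathbb Z^m$ with $v_0=0$, $v_N=(\lambda_1,\dots,\lambda_m)$, each $v_i-v_{i-1}=\hat e_\gamma$ for some $\gamma$ (a "$\gamma$-step"), and every $v_i=(x_1,\dots,x_m)$ satisfying $x_1\ge\dots\ge x_m$; $\mathcal D_\lambda$ is their set. If step $k$ is a $\gamma$-step and $v_k=(x'_1,\dots,x'_m)$, let $d\ge0$ be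 the largest integer with $x'_{\gamma-d}=\dots=x'_\gamma$; $P$ has a $d$-degree return to ground at $v_k$. $\mathcal D_\lambda(i_1,\dots,i_{m-1})$ is the set of $P\in\mathcal D_\lambda$ having, for each $1\le d\le m-1$, exactly $i_d$ indices $k\in\{1,\dots,N\}$ at which $P$ has a $d$-degree return to ground. $[p]_q=1+q+\dots+q^{p-1}$. *)

theory Defs
  imports "HOL-Computational_Algebra.Polynomial"
begin

(* Shapes: lam :: nat list = [lambda_1,...,lambda_m] (0-indexed in Isabelle).
   Boxes: (i,j) with i < m (row, row 0 = top = longest row), j < lam!i (column). *)

definition is_shape :: "nat list \<Rightarrow> bool" where
  "is_shape lam \<longleftrightarrow> lam \<noteq> [] \<and> (\<forall>i j. i \<le> j \<longrightarrow> j < length lam \<longrightarrow> lam ! j \<le> lam ! i)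
                   \<and> (\<forall>i < length lam. 1 \<le> lam ! i)"

definition boxes :: "nat list \<Rightarrow> (nat \<times> nat) set" where
  "boxes lam = {(i, j). i < length lam \<and> j < lam ! i}"

definition size_of :: "nat list \<Rightarrow> nat" where
  "size_of lam = sum_list lam"

definition row_standard :: "nat list \<Rightarrow> (nat \<times> nat \<Rightarrow> nat) \<Rightarrow> bool" where
  "row_standard lam tau \<longleftrightarrow>
     bij_betw tau (boxes lam) {1..size_of lam}
   \<and> (\<forall>i j j'. (i, j) \<in> boxes lam \<longrightarrow> (i, j') \<in> boxes lam \<longrightarrow> j < j' \<longrightarrow> tau (i, j) < tau (i, j'))
   \<and> (\<forall>c. c \<notin> boxes lam \<longrightarrow> tau c = 0)"

definition right_of :: "nat \<times> nat \<Rightarrow> nat \<Rightarrow> nat \<times> nat" where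
  "right_of c r = (fst c, snd c + r)"

definition first_diff :: "nat list \<Rightarrow> (nat \<times> nat \<Rightarrow> nat) \<Rightarrow> nat \<times> nat \<Rightarrow> nat \<times> nat \<Rightarrow> nat" where
  "first_diff lam tau c c' = (LEAST r. 1 \<le> r \<and>
      (right_of c r \<notin> boxes lam \<or> right_of c' r \<notin> boxes lam
       \<or> tau (right_of c r) \<noteq> tau (right_of c' r)))"

(* "c lies below c'" means c is in a row with larger index than c' *)
definition inversion_pair :: "nat list \<Rightarrow> (nat \<times> nat \<Rightarrow> nat) \<Rightarrow> nat \<times> nat \<Rightarrow> nat \<times> nat \<Rightarrow> bool" where
  "inversion_pair lam tau c c' \<longleftrightarrow>
     c \<in> boxes lam \<and> c' \<in> boxes lam \<and> c \<noteq> c' \<and> snd c = snd c' \<and> tau c < tau c' \<and>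
     (let r = first_diff lam tau c c' in
       ((right_of c r \<notin> boxes lam \<or> right_of c' r \<notin> boxes lam) \<and> fst c' < fst c)
     \<or> (right_of c r \<in> boxes lam \<and> right_of c' r \<in> boxes lam
         \<and> tau (right_of c' r) < tau (right_of c r)))"

definition inv_count :: "nat list \<Rightarrow> (nat \<times> nat \<Rightarrow> nat) \<Rightarrow> nat" where
  "inv_count lam tau = card {(c, c'). inversion_pair lam tau c c'}"

definition S :: "nat list \<Rightarrow> nat \<Rightarrow> (nat \<times> nat \<Rightarrow> nat) set" where
  "S lam k = {tau. row_standard lam tau \<and> inv_count lam tau = k}"

(* m-dimensional Dyck paths: lists [v_0,...,v_N] of integer vectors of length m *)
definition unit_step :: "int list \<Rightarrow> int list \<Rightarrow> nat \<Rightarrow> bool" where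
  "unit_step v w g \<longleftrightarrow> g < length v \<and> w = v[g := v ! g + 1]"

definition dyck_paths :: "nat list \<Rightarrow> int list list set" where
  "dyck_paths lam = {P. length P = size_of lam + 1
     \<and> P ! 0 = replicate (length lam) 0
     \<and> P ! size_of lam = map int lam
     \<and> (\<forall>k. 1 \<le> k \<longrightarrow> k \<le> size_of lam \<longrightarrow> (\<exists>g. unit_step (P ! (k - 1)) (P ! k) g))
     \<and> (\<forall>v \<in> set P. length v = length lam
          \<and> (\<forall>i j. i \<le> j \<longrightarrow> j < length lam \<longrightarrow> v ! j \<le> v ! i))}"

(* the direction gamma (0-indexed) of step k *)
definition step_dir :: "int list list \<Rightarrow> nat \<Rightarrow> nat" where
  "step_dir P k = (THE g. unit_step (P ! (k - 1)) (P ! k) g)"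

definition return_degree :: "int list list \<Rightarrow> nat \<Rightarrow> nat" where
  "return_degree P k = (let g = step_dir P k; x = P ! k in
      GREATEST d. d \<le> g \<and> (\<forall>t \<le> d. x ! (g - t) = x ! g))"

(* D_lam(i_1,...,i_{m-1}); the tuple is the list is = [i_1,...,i_{m-1}] *)
definition D_ret :: "nat list \<Rightarrow> nat list \<Rightarrow> int list list set" where
  "D_ret lam is = {P \<in> dyck_paths lam. \<forall>d \<in> {1..length lam - 1}.
      card {k \<in> {1..size_of lam}. return_degree P k = d} = is ! (d - 1)}"

definition qint :: "nat \<Rightarrow> int poly" where
  "qint p = (\<Sum>i<p. monom 1 i)"

end

theory Submission
  imports Defs
begin


definition dec :: "nat list \<Rightarrow> bool" where
  "dec lam \<longleftrightarrow> (\<forall>i j. i \<le> j \<longrightarrow> j < length lam \<longrightarrow> lam ! j \<le> lam ! i)"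

definition RS :: "nat list \<Rightarrow> (nat \<times> nat \<Rightarrow> nat) set" where
  "RS lam = {tau. row_standard lam tau}"

definition GF :: "nat list \<Rightarrow> int poly" where
  "GF lam = (\<Sum>tau\<in>RS lam. monom 1 (inv_count lam tau))"

definition WF :: "nat list \<Rightarrow> int poly" where
  "WF lam = (\<Sum>P\<in>dyck_paths lam. \<Prod>k\<in>{1..size_of lam}. qint (return_degree P k + 1))"

lemma finite_boxes: "finite (boxes lam)"
proof -
  have "boxes lam \<subseteq> {..<length lam} \<times> {..<sum_list lam + 1}"
    unfolding boxes_def using elem_le_sum_list[of _ lam] by fastforce
  then show ?thesis by (rule finite_subset) auto
qed

lemma finite_RS: "finite (RS lam)"
proof -
  have "RS lam \<subseteq> {f. \<forall>x. (x \<in> boxes lam \<longrightarrow> f x \<in> {1..size_of lam}) \<and> (x \<notin> boxes lam \<longrightarrow> f x = 0)}"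
    unfolding RS_def row_standard_def bij_betw_def by auto
  then show ?thesis
    by (rule finite_subset) (intro finite_set_of_finite_funs finite_boxes finite_atLeastAtMost)
qed

lemma coeff_GF: "coeff (GF lam) k = int (card (S lam k))"
proof -
  have "coeff (GF lam) k = (\<Sum>tau\<in>RS lam. if inv_count lam tau = k then 1 else 0)"
    unfolding GF_def coeff_sum coeff_monom by (intro sum.cong) auto
  also have "\<dots> = (\<Sum>tau\<in>{tau \<in> RS lam. inv_count lam tau = k}. 1)"
    by (rule sum.inter_filter[OF finite_RS, symmetric])
  also have "\<dots> = int (card (S lam k))"
    unfolding S_def RS_def by simp
  finally show ?thesis .
qed

lemma unit_step_unique: "unit_step v w g1 \<Longrightarrow> unit_step v w g2 \<Longrightarrow> g1 = g2"
  unfolding unit_step_def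
  by (metis add_cancel_left_right nth_list_update_eq nth_list_update_neq one_neq_zero)

lemma step_dir_eq: "unit_step (P ! (k - 1)) (P ! k) g \<Longrightarrow> step_dir P k = g"
  unfolding step_dir_def using unit_step_unique by blast

lemma return_degree_le:
  assumes "unit_step (P ! (k - 1)) (P ! k) g"
  shows "return_degree P k \<le> g"
proof -
  have sd: "step_dir P k = g" using step_dir_eq[OF assms] .
  let ?Q = "\<lambda>d. d \<le> g \<and> (\<forall>t \<le> d. P ! k ! (g - t) = P ! k ! g)"
  have "?Q (Greatest ?Q)" by (rule GreatestI_nat[of _ 0 g]) auto
  then show ?thesis unfolding return_degree_def sd Let_def by simp
qed


lemma prod_group_pow:
  assumes "finite K" "finite D" "h ` K \<subseteq> D"
  shows "(\<Prod>k\<in>K. f (h k)) = (\<Prod>d\<in>D. f d ^ card {k\<in>K. h k = d})"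
proof -
  have "(\<Prod>k\<in>K. f (h k)) = (\<Prod>d\<in>D. \<Prod>k\<in>{k\<in>K. h k = d}. f (h k))"
    using prod.group[OF assms, of "\<lambda>k. f (h k)"] by simp
  also have "\<dots> = (\<Prod>d\<in>D. f d ^ card {k\<in>K. h k = d})"
  proof (intro prod.cong refl)
    fix d assume "d \<in> D"
    have "(\<Prod>k\<in>{k\<in>K. h k = d}. f (h k)) = (\<Prod>k\<in>{k\<in>K. h k = d}. f d)"
      by (rule prod.cong) auto
    then show "(\<Prod>k\<in>{k\<in>K. h k = d}. f (h k)) = f d ^ card {k\<in>K. h k = d}"
      by (simp only: prod_constant)
  qed
  finally show ?thesis .
qed

lemma dyck_step:
  assumes "P \<in> dyck_paths lam" "1 \<le> k" "k \<le> size_of lam"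
  obtains g where "unit_step (P ! (k - 1)) (P ! k) g" "g < length lam"
proof -
  obtain g where u: "unit_step (P ! (k - 1)) (P ! k) g" using assms unfolding dyck_paths_def by blast
  have "P ! (k-1) \<in> set P" using assms unfolding dyck_paths_def by auto
  then have "length (P ! (k-1)) = length lam" using assms unfolding dyck_paths_def by auto
  with u have "g < length lam" unfolding unit_step_def by simp
  with u show ?thesis by (rule that)
qed

lemma rd_bound:
  assumes "P \<in> dyck_paths lam" "k \<in> {1..size_of lam}"
  shows "return_degree P k \<le> length lam - 1"
proof -
  have k: "1 \<le> k" "k \<le> size_of lam" using assms(2) by auto
  obtain g where "unit_step (P ! (k - 1)) (P ! k) g" "g < length lam"
    using dyck_step[OF assms(1) k] by blast
  then show ?thesis using return_degree_le by fastforce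
qed

definition cnt :: "nat list \<Rightarrow> int list list \<Rightarrow> nat list" where
  "cnt lam P = map (\<lambda>d. card {k \<in> {1..size_of lam}. return_degree P k = d}) [1..<length lam]"

lemma cnt_nth: "d \<in> {1..length lam - 1} \<Longrightarrow>
   cnt lam P ! (d - 1) = card {k \<in> {1..size_of lam}. return_degree P k = d}"
proof -
  assume d: "d \<in> {1..length lam - 1}"
  then have "[1..<length lam] ! (d - 1) = d" by (subst nth_upt) auto
  with d show ?thesis unfolding cnt_def by (subst nth_map) auto
qed

lemma qint1: "qint 1 = 1" unfolding qint_def by (simp add: one_poly_def monom_0 pCons_one)
lemma qint1': "qint (Suc 0) = 1" using qint1 by simp

lemma prod_cnt:
  assumes "P \<in> dyck_paths lam"
  shows "(\<Prod>j = 1..length lam - 1. qint (j + 1) ^ (cnt lam P ! (j - 1)))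
       = (\<Prod>k\<in>{1..size_of lam}. qint (return_degree P k + 1))"
proof -
  let ?m = "length lam"
  have "(\<Prod>k\<in>{1..size_of lam}. qint (return_degree P k + 1))
     = (\<Prod>d\<in>{0..?m-1}. qint (d+1) ^ card {k\<in>{1..size_of lam}. return_degree P k = d})"
    by (rule prod_group_pow[of _ _ _ "\<lambda>d. qint (d + 1)"]) (use rd_bound[OF assms] in auto)
  also have "{0..?m-1} = insert 0 {1..?m-1}" by auto
  also have "(\<Prod>d\<in>insert 0 {1..?m-1}. qint (d+1) ^ card {k\<in>{1..size_of lam}. return_degree P k = d})
     = (\<Prod>d\<in>{1..?m-1}. qint (d+1) ^ card {k\<in>{1..size_of lam}. return_degree P k = d})"
    by (subst prod.insert) (simp_all add: qint1 qint1')
  also have "\<dots> = (\<Prod>j = 1..length lam - 1. qint (j + 1) ^ (cnt lam P ! (j - 1)))"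
    by (intro prod.cong refl, simp only: cnt_nth)
  finally show ?thesis by (rule sym)
qed

lemma D_ret_eq:
  assumes "length is = length lam - 1"
  shows "D_ret lam is = {P \<in> dyck_paths lam. cnt lam P = is}"
proof -
  have "(\<forall>d \<in> {1..length lam - 1}. card {k \<in> {1..size_of lam}. return_degree P k = d} = is ! (d - 1))
        \<longleftrightarrow> cnt lam P = is" for P
  proof
    assume H: "\<forall>d \<in> {1..length lam - 1}. card {k \<in> {1..size_of lam}. return_degree P k = d} = is ! (d - 1)"
    show "cnt lam P = is"
    proof (rule nth_equalityI)
      show "length (cnt lam P) = length is" using assms by (simp add: cnt_def)
      fix i assume "i < length (cnt lam P)"
      then have "i < length lam - 1" by (simp add: cnt_def)
      then show "cnt lam P ! i = is ! i" using H[rule_format, of "i+1"] by (simp add: cnt_def)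
    qed
  next
    assume c: "cnt lam P = is"
    show "\<forall>d \<in> {1..length lam - 1}. card {k \<in> {1..size_of lam}. return_degree P k = d} = is ! (d - 1)"
    proof
      fix d assume d: "d \<in> {1..length lam - 1}"
      then have "[1..<length lam] ! (d - 1) = d" by (subst nth_upt) auto
      with d have "cnt lam P ! (d - 1) = card {k \<in> {1..size_of lam}. return_degree P k = d}"
        unfolding cnt_def by (subst nth_map) auto
      then show "card {k \<in> {1..size_of lam}. return_degree P k = d} = is ! (d - 1)" using c by simp
    qed
  qed
  then show ?thesis unfolding D_ret_def by (intro Collect_cong) blast
qed

lemma lhs_eq:
  assumes fin: "finite (dyck_paths lam)"
  shows "(\<Sum>is \<in> {is. length is = length lam - 1 \<and> (\<forall>x \<in> set is. x \<le> size_of lam)}.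
                  of_nat (card (D_ret lam is)) * (\<Prod>j = 1..length lam - 1. qint (j + 1) ^ (is ! (j - 1))))
        = WF lam"
proof -
  let ?T = "{is. length is = length lam - 1 \<and> (\<forall>x \<in> set is. x \<le> size_of lam)}"
  let ?F = "\<lambda>is. (\<Prod>j = 1..length lam - 1. qint (j + 1) ^ (is ! (j - 1)))"
  have finT: "finite ?T"
  proof (rule finite_subset)
    show "?T \<subseteq> {xs. set xs \<subseteq> {0..size_of lam} \<and> length xs = length lam - 1}" by auto
  qed (rule finite_lists_length_eq, simp)
  have sub: "cnt lam ` dyck_paths lam \<subseteq> ?T"
  proof
    fix x assume "x \<in> cnt lam ` dyck_paths lam"
    then obtain P where x: "x = cnt lam P" by auto
    have "card {k \<in> {1..size_of lam}. return_degree P k = d} \<le> card {1..size_of lam}" for d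
      by (rule card_mono) auto
    then have "card {k \<in> {1..size_of lam}. return_degree P k = d} \<le> size_of lam" for d
      by (metis card_atLeastAtMost diff_Suc_1)
    then show "x \<in> ?T" unfolding x cnt_def by auto
  qed
  have "(\<Sum>is\<in>?T. of_nat (card (D_ret lam is)) * ?F is)
      = (\<Sum>is\<in>?T. \<Sum>P\<in>{P \<in> dyck_paths lam. cnt lam P = is}. ?F (cnt lam P))"
  proof (intro sum.cong refl)
    fix iss assume "iss \<in> ?T"
    then have "D_ret lam iss = {P \<in> dyck_paths lam. cnt lam P = iss}" by (intro D_ret_eq) auto
    moreover have "(\<Sum>P\<in>{P \<in> dyck_paths lam. cnt lam P = iss}. ?F (cnt lam P))
        = (\<Sum>P\<in>{P \<in> dyck_paths lam. cnt lam P = iss}. ?F iss)"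
      by (rule sum.cong) auto
    ultimately show "of_nat (card (D_ret lam iss)) * ?F iss = (\<Sum>P\<in>{P \<in> dyck_paths lam. cnt lam P = iss}. ?F (cnt lam P))"
      by (simp only: sum_constant)
  qed
  also have "\<dots> = (\<Sum>P\<in>dyck_paths lam. ?F (cnt lam P))"
    by (rule sum.group[OF fin finT sub])
  also have "\<dots> = WF lam" unfolding WF_def by (intro sum.cong refl prod_cnt)
  finally show ?thesis .
qed


definition lamg :: "nat list \<Rightarrow> nat \<Rightarrow> nat list" where
  "lamg lam g = lam[g := lam ! g - 1]"

definition Cs :: "nat list \<Rightarrow> nat set" where
  "Cs lam = {g. g < length lam \<and> 0 < lam ! g \<and> dec (lamg lam g)}"

definition rdeg :: "nat list \<Rightarrow> nat \<Rightarrow> nat" where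
  "rdeg lam g = (GREATEST d. d \<le> g \<and> (\<forall>t\<le>d. map int lam ! (g - t) = map int lam ! g))"

lemma dyck_len: "P \<in> dyck_paths lam \<Longrightarrow> k \<le> size_of lam \<Longrightarrow> length (P ! k) = length lam"
  unfolding dyck_paths_def by auto

lemma dyck_dec: "P \<in> dyck_paths lam \<Longrightarrow> k \<le> size_of lam \<Longrightarrow> i \<le> j \<Longrightarrow> j < length lam \<Longrightarrow> P ! k ! j \<le> P ! k ! i"
  unfolding dyck_paths_def by auto

lemma dyck_set: "P \<in> dyck_paths lam \<Longrightarrow> v \<in> set P \<Longrightarrow>
   length v = length lam \<and> (\<forall>i j. i \<le> j \<longrightarrow> j < length lam \<longrightarrow> v ! j \<le> v ! i)"
  unfolding dyck_paths_def by blast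

lemma dyck_basic: "P \<in> dyck_paths lam \<Longrightarrow> length P = size_of lam + 1 \<and> P ! 0 = replicate (length lam) 0
     \<and> P ! size_of lam = map int lam"
  unfolding dyck_paths_def by blast

lemma dyck_nonneg:
  assumes P: "P \<in> dyck_paths lam"
  shows "k \<le> size_of lam \<Longrightarrow> i < length lam \<Longrightarrow> 0 \<le> P ! k ! i"
proof (induction k)
  case 0
  then show ?case using dyck_basic[OF P] by auto
next
  case (Suc k)
  obtain g where u: "unit_step (P ! (Suc k - 1)) (P ! Suc k) g" "g < length lam"
    using dyck_step[OF P, of "Suc k"] Suc.prems by auto
  have "0 \<le> P ! k ! i" using Suc by auto
  moreover have "length (P ! k) = length lam" using dyck_len[OF P] Suc.prems by auto
  ultimately show ?case using u Suc.prems unfolding unit_step_def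
    by (cases "i = g") auto
qed

lemma size_lamg: "g < length lam \<Longrightarrow> 0 < lam ! g \<Longrightarrow> size_of (lamg lam g) = size_of lam - 1"
  unfolding size_of_def lamg_def by (simp add: sum_list_update)

lemma length_lamg[simp]: "length (lamg lam g) = length lam"
  unfolding lamg_def by simp

lemma return_degree_cong:
  "P ! (k - 1) = Q ! (k - 1) \<Longrightarrow> P ! k = Q ! k \<Longrightarrow> return_degree P k = return_degree Q k"
  unfolding return_degree_def step_dir_def by simp

lemma dyck_decomp:
  assumes dec: "dec lam" and sz: "size_of lam = Suc n"
  shows "dyck_paths lam = (\<Union>g\<in>Cs lam. (\<lambda>P. P @ [map int lam]) ` dyck_paths (lamg lam g))"
proof (intro equalityI subsetI)
  fix P assume P: "P \<in> dyck_paths lam"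
  obtain g where u: "unit_step (P ! (Suc n - 1)) (P ! Suc n) g" and g: "g < length lam"
    using dyck_step[OF P, of "Suc n"] sz by auto
  let ?v = "P ! n"
  have last: "P ! Suc n = map int lam" using dyck_basic[OF P] sz by auto
  have lv: "length ?v = length lam" using dyck_len[OF P] sz by auto
  have eq: "map int lam = ?v[g := ?v ! g + 1]" using u last unfolding unit_step_def by simp
  have "map int lam ! g = ?v ! g + 1" using eq g lv by simp
  moreover have "0 \<le> ?v ! g" using dyck_nonneg[OF P, of n g] sz g by auto
  ultimately have pos: "0 < lam ! g" using g by simp
  have veq: "?v = map int (lamg lam g)"
  proof (rule nth_equalityI)
    show "length ?v = length (map int (lamg lam g))" using lv by simp
    fix i assume "i < length ?v"
    then have i: "i < length lam" using lv by simp
    show "?v ! i = map int (lamg lam g) ! i"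
    proof (cases "i = g")
      case True
      have "map int lam ! g = ?v ! g + 1" using eq g lv by simp
      then show ?thesis using True i pos unfolding lamg_def by (simp add: of_nat_diff)
    next
      case False
      have "map int lam ! i = ?v ! i" using eq False by simp
      then show ?thesis using False i unfolding lamg_def by simp
    qed
  qed
  have dg: "dec (lamg lam g)" unfolding dec_def
  proof (intro allI impI)
    fix i j assume "i \<le> j" "j < length (lamg lam g)"
    then have "?v ! j \<le> ?v ! i" using dyck_dec[OF P, of n i j] sz by simp
    then show "lamg lam g ! j \<le> lamg lam g ! i" using \<open>j < _\<close> \<open>i \<le> j\<close> unfolding veq by simp
  qed
  have gC: "g \<in> Cs lam" unfolding Cs_def using g pos dg by simp
  have lenP: "length P = Suc n + 1" using dyck_basic[OF P] sz by simp
  have Pdec: "P = butlast P @ [map int lam]"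
  proof -
    have "P \<noteq> []" using lenP by auto
    then have "P = butlast P @ [last P]" by simp
    moreover have "last P = P ! Suc n" using lenP \<open>P \<noteq> []\<close> by (simp add: last_conv_nth)
    ultimately show ?thesis using last by simp
  qed
  have szg: "size_of (lamg lam g) = n" using size_lamg[OF g pos] sz by simp
  have "butlast P \<in> dyck_paths (lamg lam g)"
    unfolding dyck_paths_def
  proof (intro CollectI conjI allI impI ballI)
    show "length (butlast P) = size_of (lamg lam g) + 1" using lenP szg by simp
    show "butlast P ! 0 = replicate (length (lamg lam g)) 0"
      using dyck_basic[OF P] lenP by (simp add: nth_butlast)
    show "butlast P ! size_of (lamg lam g) = map int (lamg lam g)"
      using lenP szg veq by (simp add: nth_butlast)
    fix k assume k: "1 \<le> k" "k \<le> size_of (lamg lam g)"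
    have k': "k \<le> size_of lam" using k szg sz by simp
    obtain g' where "unit_step (P ! (k - 1)) (P ! k) g'"
      using dyck_step[OF P k(1) k'] by blast
    moreover have "butlast P ! (k - 1) = P ! (k - 1)" "butlast P ! k = P ! k"
      using k szg lenP by (simp_all add: nth_butlast)
    ultimately show "\<exists>g. unit_step (butlast P ! (k - 1)) (butlast P ! k) g" by auto
  next
    fix v assume "v \<in> set (butlast P)"
    then have "v \<in> set P" by (rule in_set_butlastD)
    then show "length v = length (lamg lam g)" using dyck_set[OF P] by simp
    fix i j assume "i \<le> j" "j < length (lamg lam g)"
    then show "v ! j \<le> v ! i" using dyck_set[OF P \<open>v \<in> set P\<close>] by simp
  qed
  then show "P \<in> (\<Union>g\<in>Cs lam. (\<lambda>P. P @ [map int lam]) ` dyck_paths (lamg lam g))"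
    using gC Pdec by blast
next
  fix P assume "P \<in> (\<Union>g\<in>Cs lam. (\<lambda>P. P @ [map int lam]) ` dyck_paths (lamg lam g))"
  then obtain g P' where gC: "g \<in> Cs lam" and P': "P' \<in> dyck_paths (lamg lam g)"
    and PP: "P = P' @ [map int lam]" by auto
  have g: "g < length lam" and pos: "0 < lam ! g" using gC unfolding Cs_def by auto
  have szg: "size_of (lamg lam g) = n" using size_lamg[OF g pos] sz by simp
  have lenP': "length P' = Suc n" using dyck_basic[OF P'] szg by simp
  have lastP': "P' ! n = map int (lamg lam g)" using dyck_basic[OF P'] szg by simp
  have us: "unit_step (map int (lamg lam g)) (map int lam) g"
    unfolding unit_step_def
  proof
    show "g < length (map int (lamg lam g))" using g by simp
    show "map int lam = (map int (lamg lam g))[g := map int (lamg lam g) ! g + 1]"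
      by (rule nth_equalityI) (use g pos in \<open>auto simp: lamg_def nth_list_update of_nat_diff\<close>)
  qed
  show "P \<in> dyck_paths lam"
    unfolding dyck_paths_def
  proof (intro CollectI conjI allI impI ballI)
    show "length P = size_of lam + 1" using lenP' PP sz by simp
    show "P ! 0 = replicate (length lam) 0"
      using dyck_basic[OF P'] lenP' PP by (simp add: nth_append)
    show "P ! size_of lam = map int lam" using PP lenP' sz by (simp add: nth_append)
    fix k assume k: "1 \<le> k" "k \<le> size_of lam"
    show "\<exists>g. unit_step (P ! (k - 1)) (P ! k) g"
    proof (cases "k \<le> n")
      case True
      then have k': "k \<le> size_of (lamg lam g)" using szg by simp
      obtain g' where "unit_step (P' ! (k - 1)) (P' ! k) g'"
        using dyck_step[OF P' k(1) k'] by blast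
      moreover have "P ! (k - 1) = P' ! (k - 1)" "P ! k = P' ! k"
        using True k lenP' PP by (auto simp add: nth_append)
      ultimately show ?thesis by auto
    next
      case False
      then have "k = Suc n" using k sz by simp
      moreover have "P ! (k - 1) = P' ! n" "P ! k = map int lam"
        using lenP' PP \<open>k = Suc n\<close> by (simp_all add: nth_append)
      ultimately show ?thesis using us lastP' by auto
    qed
  next
    fix v assume v: "v \<in> set P"
    have "v \<in> set P' \<or> v = map int lam" using v PP by auto
    then show "length v = length lam"
      using dyck_set[OF P'] by auto
    fix i j assume ij: "i \<le> j" "j < length lam"
    show "v ! j \<le> v ! i"
    proof (cases "v \<in> set P'")
      case True
      then show ?thesis using dyck_set[OF P' True] ij by simp
    next
      case False
      then have "v = map int lam" using v PP by auto
      then show ?thesis using dec ij unfolding dec_def by simp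
    qed
  qed
qed


lemma size0_zero: "size_of lam = 0 \<Longrightarrow> i < length lam \<Longrightarrow> lam ! i = 0"
  unfolding size_of_def by (simp add: sum_list_eq_0_iff)

lemma dyck0:
  assumes "size_of lam = 0"
  shows "dyck_paths lam = {[replicate (length lam) 0]}"
proof (intro equalityI subsetI)
  fix P assume P: "P \<in> dyck_paths lam"
  then have "length P = 1" "P ! 0 = replicate (length lam) 0" using dyck_basic[OF P] assms by auto
  then show "P \<in> {[replicate (length lam) 0]}"
    by (cases P) auto
next
  fix P assume "P \<in> {[replicate (length lam) (0::int)]}"
  then have PP: "P = [replicate (length lam) 0]" by simp
  have ml: "map int lam = replicate (length lam) 0"
    by (rule nth_equalityI) (use size0_zero[OF assms] in auto)
  show "P \<in> dyck_paths lam" unfolding dyck_paths_def PP using assms ml by auto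
qed

lemma finite_Cs: "finite (Cs lam)"
  by (rule finite_subset[of _ "{..<length lam}"]) (auto simp: Cs_def)

lemma finite_dyck: "dec lam \<Longrightarrow> finite (dyck_paths lam)"
proof (induction "size_of lam" arbitrary: lam)
  case 0
  then show ?case using dyck0 by simp
next
  case (Suc n)
  have "finite (dyck_paths (lamg lam g))" if "g \<in> Cs lam" for g
  proof -
    have "g < length lam" "0 < lam ! g" "dec (lamg lam g)" using that unfolding Cs_def by auto
    then show ?thesis using Suc size_lamg by auto
  qed
  then show ?case using dyck_decomp[OF Suc(3) Suc(2)[symmetric]] finite_Cs by auto
qed

lemma rd_append_lt:
  assumes "1 \<le> k" "k < length P'"
  shows "return_degree (P' @ [v]) k = return_degree P' k"
  by (rule return_degree_cong) (use assms in \<open>auto simp add: nth_append\<close>)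

lemma rd_append_last:
  assumes P': "P' \<in> dyck_paths (lamg lam g)" and gC: "g \<in> Cs lam" and sz: "size_of lam = Suc n"
  shows "return_degree (P' @ [map int lam]) (Suc n) = rdeg lam g"
proof -
  have g: "g < length lam" and pos: "0 < lam ! g" using gC unfolding Cs_def by auto
  have szg: "size_of (lamg lam g) = n" using size_lamg[OF g pos] sz by simp
  have lenP': "length P' = Suc n" using dyck_basic[OF P'] szg by simp
  have lastP': "P' ! n = map int (lamg lam g)" using dyck_basic[OF P'] szg by simp
  have us: "unit_step (map int (lamg lam g)) (map int lam) g"
    unfolding unit_step_def
  proof
    show "g < length (map int (lamg lam g))" using g by simp
    show "map int lam = (map int (lamg lam g))[g := map int (lamg lam g) ! g + 1]"
      by (rule nth_equalityI) (use g pos in \<open>auto simp: lamg_def nth_list_update of_nat_diff\<close>)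
  qed
  have a: "(P' @ [map int lam]) ! (Suc n - 1) = map int (lamg lam g)" using lenP' lastP' by (simp add: nth_append)
  have b: "(P' @ [map int lam]) ! Suc n = map int lam" using lenP' by (simp add: nth_append)
  have "step_dir (P' @ [map int lam]) (Suc n) = g"
    by (rule step_dir_eq) (simp only: a b us)
  then show ?thesis unfolding return_degree_def rdeg_def Let_def b by simp
qed

lemma WF0: "size_of lam = 0 \<Longrightarrow> WF lam = 1"
  unfolding WF_def by (simp add: dyck0)

lemma WF_rec:
  assumes dec: "dec lam" and sz: "size_of lam = Suc n"
  shows "WF lam = (\<Sum>g\<in>Cs lam. qint (rdeg lam g + 1) * WF (lamg lam g))"
proof -
  let ?v = "map int lam"
  let ?F = "\<lambda>P. \<Prod>k\<in>{1..size_of lam}. qint (return_degree P k + 1)"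
  let ?A = "\<lambda>g. (\<lambda>P. P @ [?v]) ` dyck_paths (lamg lam g)"
  have finA: "\<forall>g\<in>Cs lam. finite (?A g)"
  proof
    fix g assume "g \<in> Cs lam"
    then have "dec (lamg lam g)" unfolding Cs_def by simp
    then show "finite (?A g)" using finite_dyck by simp
  qed
  have disj: "\<forall>g1\<in>Cs lam. \<forall>g2\<in>Cs lam. g1 \<noteq> g2 \<longrightarrow> ?A g1 \<inter> ?A g2 = {}"
  proof (intro ballI impI)
    fix g1 g2 assume g1: "g1 \<in> Cs lam" and g2: "g2 \<in> Cs lam" and ne: "g1 \<noteq> g2"
    show "?A g1 \<inter> ?A g2 = {}"
    proof (rule ccontr)
      assume "?A g1 \<inter> ?A g2 \<noteq> {}"
      then obtain P1 P2 where P1: "P1 \<in> dyck_paths (lamg lam g1)" and P2: "P2 \<in> dyck_paths (lamg lam g2)"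
        and eq: "P1 @ [?v] = P2 @ [?v]" by auto
      then have "P1 = P2" by simp
      have i1: "g1 < length lam" "0 < lam ! g1" using g1 unfolding Cs_def by auto
      have i2: "g2 < length lam" "0 < lam ! g2" using g2 unfolding Cs_def by auto
      have s1: "size_of (lamg lam g1) = n" using size_lamg[OF i1] sz by simp
      have s2: "size_of (lamg lam g2) = n" using size_lamg[OF i2] sz by simp
      have "map int (lamg lam g1) = map int (lamg lam g2)"
        using dyck_basic[OF P1] dyck_basic[OF P2] s1 s2 \<open>P1 = P2\<close> by metis
      then have "lamg lam g1 = lamg lam g2" by (simp add: inj_map_eq_map inj_on_def)
      then have "lamg lam g1 ! g1 = lamg lam g2 ! g1" by simp
      then show False using i1 ne unfolding lamg_def by simp
    qed
  qed
  have "WF lam = (\<Sum>P\<in>(\<Union>g\<in>Cs lam. ?A g). ?F P)"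
    unfolding WF_def using dyck_decomp[OF dec sz] by simp
  also have "\<dots> = (\<Sum>g\<in>Cs lam. \<Sum>P\<in>?A g. ?F P)"
    by (rule sum.UNION_disjoint[OF finite_Cs finA disj])
  also have "\<dots> = (\<Sum>g\<in>Cs lam. qint (rdeg lam g + 1) * WF (lamg lam g))"
  proof (rule sum.cong[OF refl])
    fix g assume gC: "g \<in> Cs lam"
    have g: "g < length lam" and pos: "0 < lam ! g" using gC unfolding Cs_def by auto
    have szg: "size_of (lamg lam g) = n" using size_lamg[OF g pos] sz by simp
    have "(\<Sum>P\<in>?A g. ?F P) = (\<Sum>P'\<in>dyck_paths (lamg lam g). ?F (P' @ [?v]))"
      by (subst sum.reindex) (auto simp: inj_on_def)
    also have "\<dots> = (\<Sum>P'\<in>dyck_paths (lamg lam g). qint (rdeg lam g + 1) *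
                        (\<Prod>k\<in>{1..n}. qint (return_degree P' k + 1)))"
    proof (rule sum.cong[OF refl])
      fix P' assume P': "P' \<in> dyck_paths (lamg lam g)"
      have lenP': "length P' = Suc n" using dyck_basic[OF P'] szg by simp
      have "?F (P' @ [?v]) = qint (return_degree (P' @ [?v]) (Suc n) + 1) *
               (\<Prod>k\<in>{1..n}. qint (return_degree (P' @ [?v]) k + 1))"
        unfolding sz by (rule prod.nat_ivl_Suc') simp
      also have "(\<Prod>k\<in>{1..n}. qint (return_degree (P' @ [?v]) k + 1))
               = (\<Prod>k\<in>{1..n}. qint (return_degree P' k + 1))"
        by (rule prod.cong[OF refl]) (use lenP' rd_append_lt in auto)
      finally show "?F (P' @ [?v]) = qint (rdeg lam g + 1) * (\<Prod>k\<in>{1..n}. qint (return_degree P' k + 1))"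
        using rd_append_last[OF P' gC sz] by simp
    qed
    also have "\<dots> = qint (rdeg lam g + 1) * WF (lamg lam g)"
      unfolding WF_def szg by (simp add: sum_distrib_left)
    finally show "(\<Sum>P\<in>?A g. ?F P) = qint (rdeg lam g + 1) * WF (lamg lam g)" .
  qed
  finally show ?thesis .
qed


definition invs :: "nat list \<Rightarrow> (nat \<times> nat \<Rightarrow> nat) \<Rightarrow> nat \<times> nat \<Rightarrow> nat \<times> nat \<Rightarrow> bool" where
  "invs lam tau c c' \<longleftrightarrow>
     c \<in> boxes lam \<and> c' \<in> boxes lam \<and> c \<noteq> c' \<and> snd c = snd c' \<and> tau c < tau c' \<and>
     ((right_of c 1 \<notin> boxes lam \<or> right_of c' 1 \<notin> boxes lam) \<and> fst c' < fst c
     \<or> (right_of c 1 \<in> boxes lam \<and> right_of c' 1 \<in> boxes lam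
         \<and> tau (right_of c' 1) < tau (right_of c 1)))"

lemma first_diff_1:
  assumes rs: "row_standard lam tau" and c: "c \<in> boxes lam" "c' \<in> boxes lam" "c \<noteq> c'" "snd c = snd c'"
  shows "first_diff lam tau c c' = 1"
  unfolding first_diff_def
proof (rule Least_equality)
  have inj: "inj_on tau (boxes lam)" using rs unfolding row_standard_def bij_betw_def by simp
  have "right_of c 1 \<noteq> right_of c' 1" using c unfolding right_of_def by (auto simp: prod_eq_iff)
  then show "1 \<le> (1::nat) \<and> (right_of c 1 \<notin> boxes lam \<or> right_of c' 1 \<notin> boxes lam
       \<or> tau (right_of c 1) \<noteq> tau (right_of c' 1))"
    using inj by (auto dest: inj_onD)
qed simp

lemma inversion_pair_invs:
  assumes rs: "row_standard lam tau"
  shows "inversion_pair lam tau c c' \<longleftrightarrow> invs lam tau c c'"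
proof (cases "c \<in> boxes lam \<and> c' \<in> boxes lam \<and> c \<noteq> c' \<and> snd c = snd c'")
  case True
  then have "first_diff lam tau c c' = 1" using first_diff_1[OF rs] by blast
  then show ?thesis unfolding inversion_pair_def invs_def Let_def by simp
next
  case False
  then show ?thesis unfolding inversion_pair_def invs_def by blast
qed

lemma inv_count_invs:
  "row_standard lam tau \<Longrightarrow> inv_count lam tau = card {(c, c'). invs lam tau c c'}"
proof -
  assume rs: "row_standard lam tau"
  have "{(x, y). inversion_pair lam tau x y} = {(c, c'). invs lam tau c c'}"
    using inversion_pair_invs[OF rs] by auto
  then show ?thesis unfolding inv_count_def by simp
qed

lemma finite_invs: "finite {(c, c'). invs lam tau c c'}"
  by (rule finite_subset[of _ "boxes lam \<times> boxes lam"]) (auto simp: invs_def finite_boxes)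

lemma boxes_iff: "(i, j) \<in> boxes lam \<longleftrightarrow> i < length lam \<and> j < lam ! i"
  unfolding boxes_def by simp

lemma RS0:
  assumes "size_of lam = 0"
  shows "RS lam = {\<lambda>_. 0}"
proof -
  have z: "i < length lam \<Longrightarrow> lam ! i = 0" for i
    using assms unfolding size_of_def by (simp add: sum_list_eq_0_iff)
  then have b: "boxes lam = {}" unfolding boxes_def by auto
  show ?thesis unfolding RS_def row_standard_def b using assms by (auto simp: bij_betw_def)
qed

lemma GF0: "size_of lam = 0 \<Longrightarrow> GF lam = 1"
proof -
  assume a: "size_of lam = 0"
  have z: "i < length lam \<Longrightarrow> lam ! i = 0" for i
    using a unfolding size_of_def by (simp add: sum_list_eq_0_iff)
  have "boxes lam = {}" unfolding boxes_def using z by auto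
  then have "inv_count lam (\<lambda>_. 0) = 0" unfolding inv_count_def inversion_pair_def by simp
  then show ?thesis unfolding GF_def RS0[OF a] by simp
qed


definition gam :: "nat list \<Rightarrow> nat \<Rightarrow> nat" where
  "gam lam s = (GREATEST i. i < length lam \<and> lam ! i = lam ! s)"

locale rem =
  fixes lam :: "nat list" and s :: nat
  assumes dec: "dec lam" and s: "s < length lam" and pos: "0 < lam ! s"
begin

definition "l = lam ! s"
definition "g = gam lam s"
definition "lam' = lamg lam g"
definition "N = size_of lam"
definition "nb = (s, l - 1)"
definition "pp i = (if i = g then s else if s \<le> i \<and> i < g then Suc i else i)"
definition "rr i = (if i = s then g else if s < i \<and> i \<le> g then i - 1 else i)"
definition "be z = (pp (fst z), snd z)"
definition "bi w = (rr (fst w), snd w)"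
definition "Psi sig = (\<lambda>w. if w = nb then N else if w \<in> boxes lam then sig (bi w) else 0)"
definition "Phi tau = (\<lambda>z. if z \<in> boxes lam' then tau (be z) else 0)"

lemma decD: "i \<le> j \<Longrightarrow> j < length lam \<Longrightarrow> lam ! j \<le> lam ! i"
  using dec unfolding dec_def by blast

lemma g_props: "g < length lam" "lam ! g = l" "s \<le> g"
proof -
  let ?P = "\<lambda>i. i < length lam \<and> lam ! i = lam ! s"
  have "?P (Greatest ?P)" by (rule GreatestI_nat[of _ s "length lam"]) (use s in auto)
  moreover have "s \<le> Greatest ?P" by (rule Greatest_le_nat[of _ s "length lam"]) (use s in auto)
  ultimately show "g < length lam" "lam ! g = l" "s \<le> g" unfolding g_def gam_def l_def by auto
qed

lemma g_greatest: "i < length lam \<Longrightarrow> lam ! i = l \<Longrightarrow> i \<le> g"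
proof -
  assume "i < length lam" "lam ! i = l"
  then show "i \<le> g" unfolding g_def gam_def l_def
    by (intro Greatest_le_nat[of _ i "length lam"]) auto
qed

lemma l_pos: "0 < l" using pos unfolding l_def .

lemma ge_l_iff: "i < length lam \<Longrightarrow> (l \<le> lam ! i \<longleftrightarrow> i \<le> g)"
proof
  assume i: "i < length lam" and "l \<le> lam ! i"
  show "i \<le> g"
  proof (rule ccontr)
    assume "\<not> i \<le> g"
    then have "lam ! i \<le> lam ! s" using decD[of s i] i g_props by simp
    then have "lam ! i = l" using \<open>l \<le> lam ! i\<close> unfolding l_def by simp
    then show False using g_greatest i \<open>\<not> i \<le> g\<close> by simp
  qed
next
  assume i: "i < length lam" and "i \<le> g"
  then show "l \<le> lam ! i" using decD[of i g] g_props by simp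
qed

lemma eq_l: "s \<le> i \<Longrightarrow> i \<le> g \<Longrightarrow> lam ! i = l"
  using decD[of s i] decD[of i g] g_props unfolding l_def by fastforce

lemma lam'_nth: "lam' ! i = (if i = g then l - 1 else lam ! i)"
  unfolding lam'_def lamg_def using g_props by (simp add: nth_list_update)

lemma len_lam'[simp]: "length lam' = length lam"
  unfolding lam'_def by simp

lemma size_lam': "size_of lam' = N - 1"
  unfolding lam'_def N_def using size_lamg[of g lam] g_props l_pos by simp

lemma N_pos: "1 \<le> N"
proof -
  have "lam ! s \<le> sum_list lam" using s by (simp add: elem_le_sum_list)
  then show ?thesis using pos unfolding N_def size_of_def by simp
qed

lemma rr_pp[simp]: "rr (pp i) = i"
  unfolding rr_def pp_def using g_props by auto

lemma pp_rr[simp]: "pp (rr i) = i"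
  unfolding rr_def pp_def using g_props by auto

lemma bi_be[simp]: "bi (be z) = z" unfolding bi_def be_def by simp
lemma be_bi[simp]: "be (bi z) = z" unfolding bi_def be_def by simp

lemma be_inj: "be x = be y \<longleftrightarrow> x = y" by (metis bi_be)

lemma nb_box: "nb \<in> boxes lam"
  unfolding nb_def boxes_iff using s l_pos unfolding l_def by simp

lemma key: "z \<in> boxes lam' \<longleftrightarrow> be z \<in> boxes lam \<and> be z \<noteq> nb"
proof -
  obtain i j where z: "z = (i, j)" by (cases z)
  show ?thesis
  proof (cases "i = g")
    case True
    then show ?thesis unfolding z be_def pp_def nb_def boxes_iff using g_props l_pos s
      by (auto simp: lam'_nth l_def)
  next
    case False
    note ng = False
    show ?thesis
    proof (cases "s \<le> i \<and> i < g")
      case True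
      then have "lam ! Suc i = l" "lam ! i = l" using eq_l by auto
      then show ?thesis unfolding z be_def pp_def nb_def boxes_iff using True ng g_props
        by (auto simp: lam'_nth)
    next
      case False
      then have "i \<noteq> s" using ng g_props by auto
      then show ?thesis unfolding z be_def pp_def nb_def boxes_iff using False ng
        by (auto simp: lam'_nth)
    qed
  qed
qed

lemma be_box: "z \<in> boxes lam' \<Longrightarrow> be z \<in> boxes lam" using key by blast
lemma be_nb: "z \<in> boxes lam' \<Longrightarrow> be z \<noteq> nb" using key by blast
lemma bi_box: "w \<in> boxes lam \<Longrightarrow> w \<noteq> nb \<Longrightarrow> bi w \<in> boxes lam'" using key[of "bi w"] by simp

lemma be_image: "be ` boxes lam' = boxes lam - {nb}"
proof (intro equalityI subsetI)
  fix w assume "w \<in> be ` boxes lam'" then show "w \<in> boxes lam - {nb}" using key by auto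
next
  fix w assume "w \<in> boxes lam - {nb}"
  then have "bi w \<in> boxes lam'" using bi_box by auto
  then show "w \<in> be ` boxes lam'" by (metis be_bi imageI)
qed

end


lemma rs_bij: "row_standard L tau \<Longrightarrow> inj_on tau (boxes L) \<and> tau ` boxes L = {1..size_of L}"
  unfolding row_standard_def bij_betw_def by blast

lemma rs_zero: "row_standard L tau \<Longrightarrow> c \<notin> boxes L \<Longrightarrow> tau c = 0"
  unfolding row_standard_def by blast

lemma rs_row: "row_standard L tau \<Longrightarrow> (i, j) \<in> boxes L \<Longrightarrow> (i, j') \<in> boxes L \<Longrightarrow> j < j' \<Longrightarrow> tau (i, j) < tau (i, j')"
  unfolding row_standard_def by blast

context rem begin

lemma Psi_be: "z \<in> boxes lam' \<Longrightarrow> Psi sig (be z) = sig z"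
  unfolding Psi_def using be_nb be_box by simp

lemma Psi_nb: "Psi sig nb = N" unfolding Psi_def by simp

lemma Psi_RS:
  assumes sig: "sig \<in> RS lam'"
  shows "Psi sig \<in> RS lam"
proof -
  have rs: "row_standard lam' sig" using sig unfolding RS_def by simp
  have inj: "inj_on sig (boxes lam')" and img: "sig ` boxes lam' = {1..N - 1}"
    using rs_bij[OF rs] size_lam' by auto
  have val: "z \<in> boxes lam' \<Longrightarrow> sig z \<in> {1..N-1}" for z using img by auto
  have bx: "boxes lam = insert nb (be ` boxes lam')" using be_image nb_box by auto
  have "Psi sig ` boxes lam = insert N (Psi sig ` be ` boxes lam')" unfolding bx by (simp add: Psi_nb)
  also have "Psi sig ` be ` boxes lam' = sig ` boxes lam'"
    by (auto simp: image_image Psi_be intro!: image_cong)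
  finally have im: "Psi sig ` boxes lam = {1..N}" using img N_pos by auto
  have injP: "inj_on (Psi sig) (boxes lam)"
  proof (rule inj_onI)
    fix w1 w2 assume w: "w1 \<in> boxes lam" "w2 \<in> boxes lam" and eq: "Psi sig w1 = Psi sig w2"
    show "w1 = w2"
    proof (cases "w1 = nb \<or> w2 = nb")
      case True
      then show ?thesis
      proof
        assume a: "w1 = nb"
        show ?thesis
        proof (rule ccontr)
          assume "w1 \<noteq> w2"
          then have "bi w2 \<in> boxes lam'" using bi_box w a by auto
          moreover have "Psi sig w2 = sig (bi w2)" using Psi_be[OF \<open>bi w2 \<in> _\<close>] by simp
          ultimately show False using eq a Psi_nb val by fastforce
        qed
      next
        assume a: "w2 = nb"
        show ?thesis
        proof (rule ccontr)
          assume "w1 \<noteq> w2"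
          then have "bi w1 \<in> boxes lam'" using bi_box w a by auto
          moreover have "Psi sig w1 = sig (bi w1)" using Psi_be[OF \<open>bi w1 \<in> _\<close>] by simp
          ultimately show False using eq a Psi_nb val by fastforce
        qed
      qed
    next
      case False
      then have b: "bi w1 \<in> boxes lam'" "bi w2 \<in> boxes lam'" using bi_box w by auto
      then have "sig (bi w1) = sig (bi w2)" using eq Psi_be[OF b(1)] Psi_be[OF b(2)] by simp
      then have "bi w1 = bi w2" using inj b by (auto dest: inj_onD)
      then show ?thesis by (metis be_bi)
    qed
  qed
  have rows: "Psi sig (i, j) < Psi sig (i, j')"
    if ij: "(i, j) \<in> boxes lam" "(i, j') \<in> boxes lam" "j < j'" for i j j'
  proof -
    have "(i, j) \<noteq> nb"
    proof
      assume "(i, j) = nb"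
      then have "i = s" "j = l - 1" unfolding nb_def by auto
      then show False using ij unfolding boxes_iff l_def by auto
    qed
    then have b1: "bi (i, j) \<in> boxes lam'" using bi_box ij by simp
    show ?thesis
    proof (cases "(i, j') = nb")
      case True
      then show ?thesis using Psi_be[OF b1] val[OF b1] Psi_nb N_pos by auto
    next
      case False
      then have b2: "bi (i, j') \<in> boxes lam'" using bi_box ij by simp
      have "sig (bi (i, j)) < sig (bi (i, j'))"
        using rs_row[OF rs, of "rr i" j j'] b1 b2 ij(3) unfolding bi_def by auto
      then show ?thesis using Psi_be[OF b1] Psi_be[OF b2] by simp
    qed
  qed
  have "row_standard lam (Psi sig)"
    unfolding row_standard_def bij_betw_def N_def[symmetric]
    using injP im rows by (auto simp: Psi_def nb_box)
  then show ?thesis unfolding RS_def by simp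
qed

lemma Phi_RS:
  assumes tau: "tau \<in> RS lam" and tn: "tau nb = N"
  shows "Phi tau \<in> RS lam'"
proof -
  have rs: "row_standard lam tau" using tau unfolding RS_def by simp
  have inj: "inj_on tau (boxes lam)" and img: "tau ` boxes lam = {1..N}"
    using rs_bij[OF rs] unfolding N_def by auto
  have injP: "inj_on (Phi tau) (boxes lam')"
  proof (rule inj_onI)
    fix z1 z2 assume z: "z1 \<in> boxes lam'" "z2 \<in> boxes lam'" and eq: "Phi tau z1 = Phi tau z2"
    then have "tau (be z1) = tau (be z2)" unfolding Phi_def by simp
    then have "be z1 = be z2" using inj_onD[OF inj _ be_box[OF z(1)] be_box[OF z(2)]] by simp
    then show "z1 = z2" by (simp add: be_inj)
  qed
  have "Phi tau ` boxes lam' = tau ` be ` boxes lam'"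
    unfolding Phi_def image_image by (auto intro!: image_cong)
  also have "\<dots> = tau ` (boxes lam - {nb})" using be_image by simp
  also have "\<dots> = tau ` boxes lam - {tau nb}"
    using inj nb_box by (simp add: inj_on_image_set_diff)
  also have "\<dots> = {1..N - 1}" using img tn N_pos by auto
  finally have im: "Phi tau ` boxes lam' = {1..size_of lam'}" using size_lam' by simp
  have rows: "Phi tau (i, j) < Phi tau (i, j')"
    if ij: "(i, j) \<in> boxes lam'" "(i, j') \<in> boxes lam'" "j < j'" for i j j'
  proof -
    have "be (i, j) \<in> boxes lam" "be (i, j') \<in> boxes lam" using be_box ij by auto
    then have "tau (be (i, j)) < tau (be (i, j'))"
      using rs_row[OF rs, of "pp i" j j'] ij(3) unfolding be_def by auto
    then show ?thesis using ij unfolding Phi_def by simp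
  qed
  have "row_standard lam' (Phi tau)"
    unfolding row_standard_def bij_betw_def
    using injP im rows by (auto simp: Phi_def)
  then show ?thesis unfolding RS_def by simp
qed

lemma Phi_Psi: "sig \<in> RS lam' \<Longrightarrow> Phi (Psi sig) = sig"
proof
  fix z assume "sig \<in> RS lam'"
  then have rs: "row_standard lam' sig" unfolding RS_def by simp
  show "Phi (Psi sig) z = sig z"
  proof (cases "z \<in> boxes lam'")
    case True
    then show ?thesis unfolding Phi_def using Psi_be by simp
  next
    case False
    then show ?thesis unfolding Phi_def using rs_zero[OF rs] by simp
  qed
qed

lemma Psi_Phi: "tau \<in> RS lam \<Longrightarrow> tau nb = N \<Longrightarrow> Psi (Phi tau) = tau"
proof
  fix w assume t: "tau \<in> RS lam" "tau nb = N"
  then have rs: "row_standard lam tau" unfolding RS_def by simp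
  show "Psi (Phi tau) w = tau w"
  proof (cases "w = nb")
    case True then show ?thesis using t Psi_nb by simp
  next
    case False
    show ?thesis
    proof (cases "w \<in> boxes lam")
      case True
      then have "bi w \<in> boxes lam'" using bi_box False by simp
      then show ?thesis unfolding Psi_def Phi_def using False True by simp
    next
      case nb: False
      then show ?thesis unfolding Psi_def using False rs_zero[OF rs] by simp
    qed
  qed
qed

end


context rem begin

lemma right_be: "right_of (be z) 1 = be (right_of z 1)"
  unfolding right_of_def be_def by simp

lemma bi_nb: "bi nb = (g, l - 1)"
  unfolding bi_def nb_def rr_def by simp

lemma R_nb_iff: "right_of (be z) 1 = nb \<longleftrightarrow> fst z = g \<and> snd z + 2 = l"
proof -
  have "right_of (be z) 1 = nb \<longleftrightarrow> right_of z 1 = bi nb"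
    unfolding right_be by (metis be_bi bi_be)
  also have "\<dots> \<longleftrightarrow> fst z = g \<and> snd z + 2 = l"
    unfolding bi_nb right_of_def using l_pos by (cases z) auto
  finally show ?thesis .
qed

lemma R_box_iff: "right_of (be z) 1 \<in> boxes lam \<longleftrightarrow> right_of z 1 \<in> boxes lam' \<or> (fst z = g \<and> snd z + 2 = l)"
  using key[of "right_of z 1"] R_nb_iff[of z] nb_box unfolding right_be by auto

lemma pp_order:
  assumes "a \<noteq> b"
    and nr: "\<not> ((a = g \<and> s \<le> b \<and> b < g) \<or> (b = g \<and> s \<le> a \<and> a < g))"
  shows "pp b < pp a \<longleftrightarrow> b < a"
  using assms g_props unfolding pp_def by auto

lemma core:
  assumes sig: "sig \<in> RS lam'" and x: "x \<in> boxes lam'" and y: "y \<in> boxes lam'"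
  shows "invs lam (Psi sig) (be x) (be y) \<longleftrightarrow> invs lam' sig x y"
proof -
  have rs: "row_standard lam' sig" using sig unfolding RS_def by simp
  have img: "sig ` boxes lam' = {1..N - 1}" using rs_bij[OF rs] size_lam' by auto
  have val: "z \<in> boxes lam' \<Longrightarrow> sig z \<le> N - 1" for z using img by auto
  obtain a j where xe: "x = (a, j)" by (cases x)
  obtain b j2 where ye: "y = (b, j2)" by (cases y)
  let ?t = "Psi sig"
  let ?Rx = "right_of x 1" and ?Ry = "right_of y 1"
  have base: "(be x \<in> boxes lam \<and> be y \<in> boxes lam \<and> be x \<noteq> be y \<and> snd (be x) = snd (be y) \<and> ?t (be x) < ?t (be y))
      \<longleftrightarrow> (x \<in> boxes lam' \<and> y \<in> boxes lam' \<and> x \<noteq> y \<and> snd x = snd y \<and> sig x < sig y)"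
  proof -
    have "snd (be x) = snd x" "snd (be y) = snd y" unfolding be_def by auto
    moreover have "be x \<noteq> be y \<longleftrightarrow> x \<noteq> y" using be_inj by blast
    moreover have "Psi sig (be x) = sig x" "Psi sig (be y) = sig y" using Psi_be x y by auto
    moreover have "be x \<in> boxes lam" "be y \<in> boxes lam" using be_box x y by auto
    ultimately show ?thesis using x y by (simp only: simp_thms)
  qed
  have dd: "((right_of (be x) 1 \<notin> boxes lam \<or> right_of (be y) 1 \<notin> boxes lam) \<and> fst (be y) < fst (be x)
     \<or> (right_of (be x) 1 \<in> boxes lam \<and> right_of (be y) 1 \<in> boxes lam
         \<and> ?t (right_of (be y) 1) < ?t (right_of (be x) 1)))
     \<longleftrightarrow> ((?Rx \<notin> boxes lam' \<or> ?Ry \<notin> boxes lam') \<and> fst y < fst x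
     \<or> (?Rx \<in> boxes lam' \<and> ?Ry \<in> boxes lam' \<and> sig ?Ry < sig ?Rx))"
    if ne: "x \<noteq> y" and col: "j = j2"
  proof -
    have ab: "a \<noteq> b" using ne col xe ye by simp
    have am: "a < length lam" "j < lam' ! a" using x xe boxes_iff by auto
    have bm: "b < length lam" "j < lam' ! b" using y ye col boxes_iff by auto
    have EXt: "?Rx \<in> boxes lam' \<Longrightarrow> ?t (right_of (be x) 1) = sig ?Rx"
      unfolding right_be by (rule Psi_be)
    have EYt: "?Ry \<in> boxes lam' \<Longrightarrow> ?t (right_of (be y) 1) = sig ?Ry"
      unfolding right_be by (rule Psi_be)
    have Rx: "?Rx = (a, Suc j)" "?Ry = (b, Suc j)" unfolding xe ye col right_of_def by auto
    have fx: "fst (be x) = pp a" "fst (be y) = pp b" unfolding xe ye be_def by auto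
    show ?thesis
    proof (cases "a = g \<and> j + 2 = l")
      case True
      then have sx: "a = g" "j + 2 = l" by auto
      have bg: "b \<noteq> g" using ab sx by simp
      have nEX: "?Rx \<notin> boxes lam'" unfolding Rx boxes_iff lam'_nth using sx by auto
      have EX': "right_of (be x) 1 = nb" using R_nb_iff[of x] sx xe by simp
      have EY': "right_of (be y) 1 \<in> boxes lam \<longleftrightarrow> ?Ry \<in> boxes lam'" using R_box_iff[of y] bg ye by simp
      have EY: "?Ry \<in> boxes lam' \<longleftrightarrow> b < g"
        unfolding Rx boxes_iff lam'_nth using bg bm(1) ge_l_iff[of b] sx by auto
      show ?thesis
      proof (cases "b < g")
        case True
        then have "sig ?Ry \<le> N - 1" using val EY by simp
        then show ?thesis using EX' EY EY' EYt True nEX Psi_nb nb_box N_pos fx sx xe ye by auto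
      next
        case False
        then have "pp b = b" "b > g" using bg g_props unfolding pp_def by auto
        moreover have "pp a = s" using sx unfolding pp_def by simp
        ultimately show ?thesis using EX' EY EY' False nEX nb_box fx sx xe ye g_props by auto
      qed
    next
      case nsx: False
      show ?thesis
      proof (cases "b = g \<and> j + 2 = l")
        case True
        then have sy: "b = g" "j + 2 = l" by auto
        have ag: "a \<noteq> g" using ab sy by simp
        have nEY: "?Ry \<notin> boxes lam'" unfolding Rx boxes_iff lam'_nth using sy by auto
        have EY': "right_of (be y) 1 = nb" using R_nb_iff[of y] sy ye col by simp
        have EX': "right_of (be x) 1 \<in> boxes lam \<longleftrightarrow> ?Rx \<in> boxes lam'" using R_box_iff[of x] ag xe by simp
        have EX: "?Rx \<in> boxes lam' \<longleftrightarrow> a < g"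
          unfolding Rx boxes_iff lam'_nth using ag am(1) ge_l_iff[of a] sy by auto
        show ?thesis
        proof (cases "a < g")
          case True
          then have "sig ?Rx \<le> N - 1" using val EX by simp
          then show ?thesis using EX' EY' EX EXt True nEY Psi_nb nb_box N_pos fx sy xe ye by auto
        next
          case False
          then have "pp a = a" "a > g" using ag g_props unfolding pp_def by auto
          moreover have "pp b = s" using sy unfolding pp_def by simp
          ultimately show ?thesis using EX' EY' EX False nEY nb_box fx sy xe ye g_props by auto
        qed
      next
        case nsy: False
        have EX': "right_of (be x) 1 \<in> boxes lam \<longleftrightarrow> ?Rx \<in> boxes lam'" using R_box_iff[of x] nsx xe by auto
        have EY': "right_of (be y) 1 \<in> boxes lam \<longleftrightarrow> ?Ry \<in> boxes lam'" using R_box_iff[of y] nsy ye col by auto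
        have ord: "pp b < pp a \<longleftrightarrow> b < a" if "\<not> (?Rx \<in> boxes lam' \<and> ?Ry \<in> boxes lam')"
        proof (rule pp_order[OF ab])
          show "\<not> ((a = g \<and> s \<le> b \<and> b < g) \<or> (b = g \<and> s \<le> a \<and> a < g))"
          proof
            assume rv: "(a = g \<and> s \<le> b \<and> b < g) \<or> (b = g \<and> s \<le> a \<and> a < g)"
            have "?Rx \<in> boxes lam' \<and> ?Ry \<in> boxes lam'"
            proof (cases "a = g")
              case True
              then have "lam ! b = l" using rv eq_l by auto
              then show ?thesis unfolding Rx boxes_iff lam'_nth
                using True rv am bm nsx by (auto simp: lam'_nth)
            next
              case False
              then have "b = g" "lam ! a = l" using rv eq_l by auto
              then show ?thesis unfolding Rx boxes_iff lam'_nth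
                using False rv am bm nsy by (auto simp: lam'_nth)
            qed
            then show False using that by simp
          qed
        qed
        show ?thesis
        proof (cases "?Rx \<in> boxes lam' \<and> ?Ry \<in> boxes lam'")
          case True
          then show ?thesis using EX' EY' EXt EYt by auto
        next
          case False
          then show ?thesis using EX' EY' ord[OF False] fx xe ye by auto
        qed
      qed
    qed
  qed
  show ?thesis
  proof (cases "x \<noteq> y \<and> j = j2")
    case True
    then show ?thesis using base dd[of] True unfolding invs_def
      by (metis (no_types, lifting))
  next
    case False
    then have "\<not> (x \<noteq> y \<and> snd x = snd y)" using xe ye by auto
    moreover have "be x \<noteq> be y \<longleftrightarrow> x \<noteq> y" using be_inj by blast
    moreover have "snd (be x) = snd x" "snd (be y) = snd y" by (simp_all add: be_def)
    ultimately have n1: "\<not> (be x \<noteq> be y \<and> snd (be x) = snd (be y))" by simp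
    show ?thesis unfolding invs_def using n1 \<open>\<not> (x \<noteq> y \<and> snd x = snd y)\<close> by blast
  qed
qed

end


context rem begin

lemma inv_Psi:
  assumes sig: "sig \<in> RS lam'"
  shows "inv_count lam (Psi sig) = inv_count lam' sig + (g - s)"
proof -
  let ?t = "Psi sig"
  have rs': "row_standard lam' sig" using sig unfolding RS_def by simp
  have rs: "row_standard lam ?t" using Psi_RS[OF sig] unfolding RS_def by simp
  have img: "sig ` boxes lam' = {1..N - 1}" using rs_bij[OF rs'] size_lam' by auto
  have imgt: "?t ` boxes lam = {1..N}" using rs_bij[OF rs] unfolding N_def by auto
  let ?IP = "{(c, c'). invs lam ?t c c'}"
  let ?IP' = "{(x, y). invs lam' sig x y}"
  let ?f = "\<lambda>(x, y). (be x, be y)"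
  let ?E = "(\<lambda>t. ((t, l - 1), nb)) ` {s<..g}"
  have Rnb: "right_of nb 1 \<notin> boxes lam" unfolding nb_def right_of_def boxes_iff l_def using l_pos
    unfolding l_def by simp
  have eq: "?IP = ?f ` ?IP' \<union> ?E"
  proof (intro equalityI subsetI)
    fix p assume "p \<in> ?IP"
    then obtain c c' where p: "p = (c, c')" and iv: "invs lam ?t c c'" by auto
    have cb: "c \<in> boxes lam" "c' \<in> boxes lam" using iv unfolding invs_def by auto
    show "p \<in> ?f ` ?IP' \<union> ?E"
    proof (cases "c' = nb")
      case True
      obtain t j where c: "c = (t, j)" by (cases c)
      have "j = l - 1" using iv True c unfolding invs_def nb_def by simp
      moreover have "s < t" using iv True c Rnb unfolding invs_def nb_def by auto
      moreover have "t \<le> g"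
      proof -
        have "t < length lam \<and> l - 1 < lam ! t" using cb(1) c \<open>j = l - 1\<close> by (simp add: boxes_iff)
        then show ?thesis using ge_l_iff[of t] l_pos by auto
      qed
      ultimately show ?thesis using p c True by auto
    next
      case False
      have "c \<noteq> nb"
      proof
        assume "c = nb"
        then have "?t c = N" using Psi_nb by simp
        moreover have "?t c' \<le> N" using imgt cb by auto
        ultimately show False using iv unfolding invs_def by simp
      qed
      then have b: "bi c \<in> boxes lam'" "bi c' \<in> boxes lam'" using bi_box cb False by auto
      have "invs lam ?t (be (bi c)) (be (bi c'))" using iv by simp
      then have "invs lam' sig (bi c) (bi c')" using core[OF sig b] by simp
      moreover have "p = ?f (bi c, bi c')" using p by simp
      ultimately show ?thesis by blast
    qed
  next
    fix p assume "p \<in> ?f ` ?IP' \<union> ?E"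
    then show "p \<in> ?IP"
    proof
      assume "p \<in> ?f ` ?IP'"
      then obtain x y where p: "p = (be x, be y)" and iv: "invs lam' sig x y" by auto
      have "x \<in> boxes lam'" "y \<in> boxes lam'" using iv unfolding invs_def by auto
      then show ?thesis using core[OF sig] iv p by simp
    next
      assume "p \<in> ?E"
      then obtain t where p: "p = ((t, l - 1), nb)" and t: "s < t" "t \<le> g" by auto
      have tb: "(t, l - 1) \<in> boxes lam" unfolding boxes_iff using t g_props ge_l_iff[of t] l_pos by auto
      have tn: "(t, l - 1) \<noteq> nb" using t unfolding nb_def by simp
      have "bi (t, l - 1) \<in> boxes lam'" using bi_box tb tn by simp
      then have "?t (t, l - 1) = sig (bi (t, l - 1))" using Psi_be by (metis be_bi)
      moreover have "sig (bi (t, l - 1)) \<le> N - 1" using img \<open>bi (t, l - 1) \<in> boxes lam'\<close> by auto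
      ultimately have "?t (t, l - 1) < ?t nb" using Psi_nb N_pos by simp
      then show ?thesis using p tb tn nb_box Rnb t unfolding invs_def by (auto simp: nb_def)
    qed
  qed
  have inj: "inj_on ?f ?IP'"
  proof (rule inj_onI)
    fix p q assume "?f p = ?f q"
    moreover obtain x y where p: "p = (x, y)" by (cases p)
    moreover obtain x' y' where q: "q = (x', y')" by (cases q)
    ultimately have "be x = be x'" "be y = be y'" by simp_all
    then have "x = x'" "y = y'" by (metis bi_be)+
    then show "p = q" using p q by simp
  qed
  have disj: "?f ` ?IP' \<inter> ?E = {}"
  proof -
    have "snd (?f q) \<noteq> nb" if "q \<in> ?IP'" for q
    proof -
      obtain x y where q: "q = (x, y)" by (cases q)
      have "invs lam' sig x y" using that q by simp
      then have "y \<in> boxes lam'" unfolding invs_def by auto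
      then show ?thesis using be_nb q by simp
    qed
    then have A: "p \<in> ?f ` ?IP' \<Longrightarrow> snd p \<noteq> nb" for p by blast
    have B: "p \<in> ?E \<Longrightarrow> snd p = nb" for p by (auto simp del: nb_def)
    show ?thesis using A B by blast
  qed
  have cE: "card ?E = g - s" by (subst card_image) (auto simp: inj_on_def)
  have fin': "finite ?IP'" by (rule finite_invs)
  have "inv_count lam ?t = card ?IP" by (rule inv_count_invs[OF rs])
  also have "\<dots> = card (?f ` ?IP') + card ?E"
    unfolding eq by (rule card_Un_disjoint) (use fin' disj in auto)
  also have "card (?f ` ?IP') = card ?IP'" by (rule card_image[OF inj])
  also have "card ?IP' = inv_count lam' sig" by (rule inv_count_invs[OF rs', symmetric])
  finally show ?thesis using cE by simp
qed

lemma sum_As: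
  "(\<Sum>tau\<in>{tau \<in> RS lam. tau nb = N}. monom (1::int) (inv_count lam tau)) = monom 1 (g - s) * GF lam'"
proof -
  have "(\<Sum>tau\<in>{tau \<in> RS lam. tau nb = N}. monom (1::int) (inv_count lam tau))
      = (\<Sum>sig\<in>RS lam'. monom 1 (inv_count lam (Psi sig)))"
  proof (rule sum.reindex_bij_witness[of _ Psi Phi])
    fix tau assume "tau \<in> {tau \<in> RS lam. tau nb = N}"
    then show "Psi (Phi tau) = tau" "Phi tau \<in> RS lam'" "monom 1 (inv_count lam (Psi (Phi tau))) = monom 1 (inv_count lam tau)"
      using Psi_Phi Phi_RS by auto
  next
    fix sig assume "sig \<in> RS lam'"
    then show "Phi (Psi sig) = sig" "Psi sig \<in> {tau \<in> RS lam. tau nb = N}"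
      using Phi_Psi Psi_RS Psi_nb by auto
  qed
  also have "\<dots> = (\<Sum>sig\<in>RS lam'. monom 1 (g - s) * monom 1 (inv_count lam' sig))"
    by (rule sum.cong[OF refl]) (simp add: inv_Psi mult_monom add.commute)
  also have "\<dots> = monom 1 (g - s) * GF lam'"
    unfolding GF_def by (simp add: sum_distrib_left)
  finally show ?thesis .
qed

end


context rem begin

lemma dec_lam': "dec lam'"
  unfolding dec_def
proof (intro allI impI)
  fix i j assume ij: "i \<le> j" "j < length lam'"
  then have jm: "j < length lam" by simp
  show "lam' ! j \<le> lam' ! i"
  proof (cases "j = g")
    case True
    then show ?thesis using ij decD[of i g] g_props by (auto simp: lam'_nth)
  next
    case False
    note jg = False
    show ?thesis
    proof (cases "i = g")
      case True
      then have "g < j" using ij jg by simp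
      then have "lam ! j < l" using ge_l_iff[OF jm] by simp
      then show ?thesis using True jg by (simp add: lam'_nth)
    next
      case False
      then show ?thesis using jg decD[OF ij(1) jm] by (simp add: lam'_nth)
    qed
  qed
qed

lemma gam_Cs: "gam lam s \<in> Cs lam"
  using g_props dec_lam' l_pos unfolding Cs_def g_def[symmetric] lam'_def by simp

end

definition Rs :: "nat list \<Rightarrow> nat set" where
  "Rs lam = {s. s < length lam \<and> 0 < lam ! s}"

lemma finite_Rs: "finite (Rs lam)" by (rule finite_subset[of _ "{..<length lam}"]) (auto simp: Rs_def)

lemma gam_block:
  assumes dec: "dec lam" and gC: "g \<in> Cs lam"
  shows "{s \<in> Rs lam. gam lam s = g} = {g - rdeg lam g..g}" and "rdeg lam g \<le> g"
proof -
  have g: "g < length lam" and pos: "0 < lam ! g" and dg: "dec (lamg lam g)" using gC unfolding Cs_def by auto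
  have decD: "i \<le> j \<Longrightarrow> j < length lam \<Longrightarrow> lam ! j \<le> lam ! i" for i j using dec unfolding dec_def by blast
  have drop: "g < j \<Longrightarrow> j < length lam \<Longrightarrow> lam ! j < lam ! g" for j
  proof -
    assume j: "g < j" "j < length lam"
    have "lamg lam g ! (Suc g) \<le> lamg lam g ! g" using dg j unfolding dec_def by simp
    then have "lam ! Suc g < lam ! g" using pos g j unfolding lamg_def by (simp add: nth_list_update)
    moreover have "lam ! j \<le> lam ! Suc g" using decD j by simp
    ultimately show ?thesis by simp
  qed
  have gam_iff: "gam lam s = g \<longleftrightarrow> lam ! s = lam ! g" if s: "s < length lam" for s
  proof
    assume "gam lam s = g"
    moreover have "lam ! (gam lam s) = lam ! s"
      unfolding gam_def by (rule GreatestI_nat[of _ s "length lam", THEN conjunct2]) (use s in auto)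
    ultimately show "lam ! s = lam ! g" by simp
  next
    assume eq: "lam ! s = lam ! g"
    show "gam lam s = g" unfolding gam_def
    proof (rule Greatest_equality)
      show "g < length lam \<and> lam ! g = lam ! s" using g eq by simp
      fix y assume "y < length lam \<and> lam ! y = lam ! s"
      then show "y \<le> g" using drop eq by (metis less_irrefl not_le_imp_less)
    qed
  qed
  let ?P = "\<lambda>d. d \<le> g \<and> (\<forall>t\<le>d. map int lam ! (g - t) = map int lam ! g)"
  have Pd: "?P (rdeg lam g)" unfolding rdeg_def by (rule GreatestI_nat[of _ 0 g]) auto
  then show "rdeg lam g \<le> g" by simp
  show "{s \<in> Rs lam. gam lam s = g} = {g - rdeg lam g..g}"
  proof (intro equalityI subsetI)
    fix s assume "s \<in> {s \<in> Rs lam. gam lam s = g}"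
    then have s: "s < length lam" "0 < lam ! s" "gam lam s = g" unfolding Rs_def by auto
    then have eq: "lam ! s = lam ! g" using gam_iff by simp
    have sg: "s \<le> g" using drop s eq by (metis less_irrefl not_le_imp_less)
    have "?P (g - s)"
    proof (intro conjI allI impI)
      fix t assume t: "t \<le> g - s"
      have "lam ! g \<le> lam ! (g - t)" using decD g by simp
      moreover have "lam ! (g - t) \<le> lam ! s" using decD[of s "g - t"] t g sg by simp
      ultimately show "map int lam ! (g - t) = map int lam ! g" using eq g by simp
    qed simp
    then have "g - s \<le> rdeg lam g" unfolding rdeg_def by (rule Greatest_le_nat[of _ _ g]) simp
    then show "s \<in> {g - rdeg lam g..g}" using sg by simp
  next
    fix s assume "s \<in> {g - rdeg lam g..g}"
    then have s: "g - rdeg lam g \<le> s" "s \<le> g" by auto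
    then have "g - s \<le> rdeg lam g" by simp
    then have "map int lam ! (g - (g - s)) = map int lam ! g" using Pd by blast
    then have eq: "lam ! s = lam ! g" using s g by simp
    have sm: "s < length lam" using s g by simp
    then show "s \<in> {s \<in> Rs lam. gam lam s = g}" using gam_iff eq pos unfolding Rs_def by simp
  qed
qed

lemma sum_block:
  "(\<Sum>s\<in>{g - d..g}. monom (1::int) (g - s)) = qint (d + 1)" if "d \<le> g"
proof -
  have "(\<Sum>s\<in>{g - d..g}. monom (1::int) (g - s)) = (\<Sum>i\<in>{..<d+1}. monom 1 i)"
    by (rule sum.reindex_bij_witness[of _ "\<lambda>i. g - i" "\<lambda>s. g - s"]) (use that in auto)
  then show ?thesis unfolding qint_def by simp
qed


lemma N_box:
  assumes tau: "tau \<in> RS lam" and sz: "size_of lam = Suc n"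
  defines "b \<equiv> inv_into (boxes lam) tau (size_of lam)"
  shows "b \<in> boxes lam" "tau b = size_of lam" "snd b = lam ! fst b - 1" "fst b \<in> Rs lam"
proof -
  have rs: "row_standard lam tau" using tau unfolding RS_def by simp
  have inj: "inj_on tau (boxes lam)" and img: "tau ` boxes lam = {1..size_of lam}"
    using rs_bij[OF rs] by auto
  have Nin: "size_of lam \<in> tau ` boxes lam" using img sz by simp
  show bb: "b \<in> boxes lam" unfolding b_def by (rule inv_into_into[OF Nin])
  show tb: "tau b = size_of lam" unfolding b_def by (rule f_inv_into_f[OF Nin])
  obtain i j where bij: "b = (i, j)" by (cases b)
  have ij: "i < length lam" "j < lam ! i" using bb bij boxes_iff by auto
  have "\<not> Suc j < lam ! i"
  proof
    assume a: "Suc j < lam ! i"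
    then have "(i, Suc j) \<in> boxes lam" using ij boxes_iff by auto
    then have "tau (i, j) < tau (i, Suc j)" "tau (i, Suc j) \<le> size_of lam"
      using rs_row[OF rs] bb bij img by auto
    then show False using tb bij by simp
  qed
  then show "snd b = lam ! fst b - 1" using ij bij by simp
  show "fst b \<in> Rs lam" using ij bij unfolding Rs_def by simp
qed

lemma GF_rec:
  assumes dec: "dec lam" and sz: "size_of lam = Suc n"
  shows "GF lam = (\<Sum>g\<in>Cs lam. qint (rdeg lam g + 1) * GF (lamg lam g))"
proof -
  define rowN where "rowN tau = fst (inv_into (boxes lam) tau (size_of lam))" for tau
  let ?h = "\<lambda>tau. monom (1::int) (inv_count lam tau)"
  have sub: "rowN ` RS lam \<subseteq> Rs lam" using N_box(4)[OF _ sz] unfolding rowN_def by auto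
  have blk: "{tau \<in> RS lam. rowN tau = s} = {tau \<in> RS lam. tau (s, lam ! s - 1) = size_of lam}"
    if s: "s \<in> Rs lam" for s
  proof (intro equalityI subsetI)
    fix tau assume "tau \<in> {tau \<in> RS lam. rowN tau = s}"
    then have t: "tau \<in> RS lam" "rowN tau = s" by auto
    let ?b = "inv_into (boxes lam) tau (size_of lam)"
    have "?b = (s, lam ! s - 1)" using N_box(3)[OF t(1) sz] t(2) unfolding rowN_def by (simp add: prod_eq_iff)
    then show "tau \<in> {tau \<in> RS lam. tau (s, lam ! s - 1) = size_of lam}" using N_box(2)[OF t(1) sz] t by simp
  next
    fix tau assume "tau \<in> {tau \<in> RS lam. tau (s, lam ! s - 1) = size_of lam}"
    then have t: "tau \<in> RS lam" "tau (s, lam ! s - 1) = size_of lam" by auto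
    let ?b = "inv_into (boxes lam) tau (size_of lam)"
    have rs: "row_standard lam tau" using t unfolding RS_def by simp
    have inj: "inj_on tau (boxes lam)" using rs_bij[OF rs] by auto
    have sb: "(s, lam ! s - 1) \<in> boxes lam" using s unfolding Rs_def boxes_iff by auto
    have "?b = (s, lam ! s - 1)"
      using inj_onD[OF inj _ N_box(1)[OF t(1) sz] sb] N_box(2)[OF t(1) sz] t(2) by simp
    then show "tau \<in> {tau \<in> RS lam. rowN tau = s}" using t unfolding rowN_def by simp
  qed
  have "GF lam = (\<Sum>s\<in>Rs lam. \<Sum>tau\<in>{tau \<in> RS lam. rowN tau = s}. ?h tau)"
    unfolding GF_def by (rule sum.group[OF finite_RS finite_Rs sub, symmetric])
  also have "\<dots> = (\<Sum>s\<in>Rs lam. monom 1 (gam lam s - s) * GF (lamg lam (gam lam s)))"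
  proof (rule sum.cong[OF refl])
    fix s assume s: "s \<in> Rs lam"
    interpret r: rem lam s using dec s unfolding Rs_def by unfold_locales auto
    have "{tau \<in> RS lam. rowN tau = s} = {tau \<in> RS lam. tau (rem.nb lam s) = rem.N lam}"
      unfolding blk[OF s] r.nb_def r.l_def r.N_def by simp
    then show "(\<Sum>tau\<in>{tau \<in> RS lam. rowN tau = s}. ?h tau) = monom 1 (gam lam s - s) * GF (lamg lam (gam lam s))"
      using r.sum_As unfolding r.g_def r.lam'_def by simp
  qed
  also have "\<dots> = (\<Sum>g\<in>Cs lam. \<Sum>s\<in>{s \<in> Rs lam. gam lam s = g}. monom 1 (gam lam s - s) * GF (lamg lam (gam lam s)))"
  proof (rule sum.group[OF finite_Rs finite_Cs, symmetric])
    show "gam lam ` Rs lam \<subseteq> Cs lam"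
    proof
      fix x assume "x \<in> gam lam ` Rs lam"
      then obtain s where s: "s \<in> Rs lam" and x: "x = gam lam s" by auto
      interpret r: rem lam s using dec s unfolding Rs_def by unfold_locales auto
      show "x \<in> Cs lam" using r.gam_Cs x by simp
    qed
  qed
  also have "\<dots> = (\<Sum>g\<in>Cs lam. qint (rdeg lam g + 1) * GF (lamg lam g))"
  proof (rule sum.cong[OF refl])
    fix g assume gC: "g \<in> Cs lam"
    have "(\<Sum>s\<in>{s \<in> Rs lam. gam lam s = g}. monom 1 (gam lam s - s) * GF (lamg lam (gam lam s)))
        = (\<Sum>s\<in>{g - rdeg lam g..g}. monom 1 (g - s) * GF (lamg lam g))"
      unfolding gam_block(1)[OF dec gC, symmetric] by (rule sum.cong) auto
    also have "\<dots> = (\<Sum>s\<in>{g - rdeg lam g..g}. monom 1 (g - s)) * GF (lamg lam g)"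
      by (simp add: sum_distrib_right)
    also have "\<dots> = qint (rdeg lam g + 1) * GF (lamg lam g)"
      using sum_block[OF gam_block(2)[OF dec gC]] by simp
    finally show "(\<Sum>s\<in>{s \<in> Rs lam. gam lam s = g}. monom 1 (gam lam s - s) * GF (lamg lam (gam lam s)))
        = qint (rdeg lam g + 1) * GF (lamg lam g)" .
  qed
  finally show ?thesis .
qed

lemma WF_GF: "dec lam \<Longrightarrow> WF lam = GF lam"
proof (induction "size_of lam" arbitrary: lam)
  case 0
  then show ?case using WF0 GF0 by simp
next
  case (Suc n)
  have IH: "WF (lamg lam g) = GF (lamg lam g)" if "g \<in> Cs lam" for g
  proof -
    have "g < length lam" "0 < lam ! g" "dec (lamg lam g)" using that unfolding Cs_def by auto
    then show ?thesis using Suc size_lamg by auto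
  qed
  show ?case
    unfolding WF_rec[OF Suc(3) Suc(2)[symmetric]] GF_rec[OF Suc(3) Suc(2)[symmetric]]
    using IH by (intro sum.cong) auto
qed

theorem mainTheorem14:
  fixes lam :: "nat list"
  assumes "is_shape lam"
  shows "\<forall>k. coeff (\<Sum>is \<in> {is. length is = length lam - 1 \<and> (\<forall>x \<in> set is. x \<le> size_of lam)}.
                  of_nat (card (D_ret lam is)) * (\<Prod>j = 1..length lam - 1. qint (j + 1) ^ (is ! (j - 1)))) k
             = int (card (S lam k))"
proof
  fix k
  have dec: "dec lam" using assms unfolding is_shape_def dec_def by blast
  show "coeff (\<Sum>is \<in> {is. length is = length lam - 1 \<and> (\<forall>x \<in> set is. x \<le> size_of lam)}.
                  of_nat (card (D_ret lam is)) * (\<Prod>j = 1..length lam - 1. qint (j + 1) ^ (is ! (j - 1)))) k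
             = int (card (S lam k))"
    unfolding lhs_eq[OF finite_dyck[OF dec]] WF_GF[OF dec] coeff_GF ..
qed


end
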